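(* Let $k\ge2$ and let $\mathcal X=\{x_1,\dots,x_{k+1}\}\subset\mathbb R^d$ be in general position with $c(\mathcal X)\in\sigma(\mathcal X)$. Suppose the facet $\hat{\mathcal X}_{\min}$ of $\mathcal X$ whose affine hull is closest to $c(\mathcal X)$ is unique. Then $c(\hat{\mathcal X}_{\min})\in\sigma(\hat{\mathcal X}_{\min})$.
   Context: For a set $\mathcal Y$ of $m+1$ affinely independent points in $\mathbb R^d$, $c(\mathcal Y)$ is the point equidistant from all points of $\mathcal Y$ that minimizes this common distance (equivalently, the circumcenter of $\mathcal Y$ within its affine hull), and $\sigma(\mathcal Y)$ is the open geometric $m$-simplex spanned by $\mathcal Y$ (its relative interior). The facets of $\mathcal X$ are the sets $\mathcal X\setminus\{x_i\}$; $\hat{\mathcal X}_{\min}$ is the facet minimizing the Euclidean distance from $c(\mathcal X)$ to its affine hull. *)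

theory Defs
  imports "HOL-Analysis.Analysis"
begin

text \<open>Circumcenter c(Y): the unique point of the affine hull of Y equidistant from all points of Y
  (well defined when Y is affinely independent).\<close>
definition circumcenter :: "'a::euclidean_space set \<Rightarrow> 'a" where
  "circumcenter Y = (THE c. c \<in> affine hull Y \<and> (\<forall>y\<in>Y. \<forall>z\<in>Y. dist c y = dist c z))"

definition open_simplex :: "'a::euclidean_space set \<Rightarrow> 'a set" where
  "open_simplex Y = rel_interior (convex hull Y)"

end

theory Submission
  imports Defs
begin


definition perp :: "'a::euclidean_space \<Rightarrow> 'a set \<Rightarrow> bool" where
  "perp v S \<longleftrightarrow> (\<forall>y\<in>affine hull S. \<forall>z\<in>affine hull S. inner v (y - z) = 0)"

lemma hyper_hull:
  fixes a :: "'a::euclidean_space"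
  assumes "\<forall>y\<in>S. inner a y = b" "u \<in> affine hull S"
  shows "inner a u = b"
proof -
  have "affine hull S \<subseteq> {x. a \<bullet> x = b}"
    by (rule hull_minimal) (use assms affine_hyperplane in auto)
  then show ?thesis using assms by auto
qed

lemma perpI:
  fixes v :: "'a::euclidean_space"
  assumes "\<forall>y\<in>S. inner v y = b"
  shows "perp v S"
  unfolding perp_def using hyper_hull[OF assms] by (simp add: inner_diff_right)

lemma perpD: "perp v S \<Longrightarrow> y \<in> affine hull S \<Longrightarrow> z \<in> affine hull S \<Longrightarrow> inner v (y - z) = 0"
  unfolding perp_def by blast

lemma foot_exists:
  fixes x :: "'a::euclidean_space"
  assumes "S \<noteq> {}"
  shows "\<exists>p\<in>affine hull S. perp (x - p) S"
proof -
  let ?A = "affine hull S"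
  let ?p = "closest_point ?A x"
  have ne: "?A \<noteq> {}" using assms by simp
  have pin: "?p \<in> ?A" using closest_point_in_set[OF closed_affine_hull ne] .
  have le: "\<forall>z\<in>?A. dist x ?p \<le> dist x z" using closest_point_exists(2)[OF closed_affine_hull ne] .
  have cv: "convex ?A" by (simp add: affine_imp_convex)
  have h: "inner (x - ?p) (y - ?p) = 0" if y: "y \<in> ?A" for y
  proof -
    have "inner (x - ?p) (y - ?p) \<le> 0"
      using any_closest_point_dot[OF cv closed_affine_hull pin y le] .
    moreover have y2: "?p + 1 *\<^sub>R (?p - y) \<in> ?A"
      using mem_affine_3_minus[OF affine_affine_hull pin pin y] .
    have "inner (x - ?p) ((?p + 1 *\<^sub>R (?p - y)) - ?p) \<le> 0"
      using any_closest_point_dot[OF cv closed_affine_hull pin y2 le] .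
    then have "inner (x - ?p) (?p - y) \<le> 0" by simp
    ultimately show ?thesis by (simp add: inner_diff_right)
  qed
  have "perp (x - ?p) S"
    unfolding perp_def
  proof (intro ballI)
    fix y z assume "y \<in> ?A" "z \<in> ?A"
    then have "inner (x - ?p) (y - ?p) = 0" "inner (x - ?p) (z - ?p) = 0" using h by auto
    then show "inner (x - ?p) (y - z) = 0" by (simp add: inner_diff_right)
  qed
  then show ?thesis using pin by blast
qed

lemma pyth: "inner u v = 0 \<Longrightarrow> (norm (u + v))\<^sup>2 = (norm u)\<^sup>2 + (norm v)\<^sup>2"
  by (simp add: power2_norm_eq_inner inner_add_left inner_add_right inner_commute)

lemma infdist_foot:
  fixes x :: "'a::euclidean_space"
  assumes "p \<in> affine hull S" "perp (x - p) S"
  shows "infdist x (affine hull S) = dist x p"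
proof -
  have ge: "dist x p \<le> dist x y" if "y \<in> affine hull S" for y
  proof -
    have "inner (x - p) (p - y) = 0" using perpD[OF assms(2) assms(1) that] .
    then have "(norm ((x - p) + (p - y)))\<^sup>2 = (norm (x - p))\<^sup>2 + (norm (p - y))\<^sup>2" by (rule pyth)
    then have "(norm (x - p))\<^sup>2 \<le> (norm (x - y))\<^sup>2" by simp
    then show ?thesis by (simp add: dist_norm)
  qed
  have ne: "affine hull S \<noteq> {}" using assms(1) by auto
  show ?thesis
  proof (rule antisym)
    show "infdist x (affine hull S) \<le> dist x p" by (rule infdist_le[OF assms(1)])
    show "dist x p \<le> infdist x (affine hull S)"
      unfolding infdist_notempty[OF ne] by (rule cINF_greatest[OF ne ge])
  qed
qed

lemma foot_unique:
  fixes x :: "'a::euclidean_space"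
  assumes "p \<in> affine hull S" "perp (x - p) S" "p' \<in> affine hull S" "perp (x - p') S"
  shows "p = p'"
proof -
  have "inner (x - p) (p' - p) = 0" "inner (x - p') (p' - p) = 0"
    using perpD assms by blast+
  then have "inner (p' - p) (p' - p) = 0" by (simp add: inner_diff_left inner_diff_right inner_commute)
  then show ?thesis by simp
qed

lemma circ_unique:
  fixes c1 :: "'a::euclidean_space"
  assumes "c1 \<in> affine hull S" "\<forall>y\<in>S. \<forall>z\<in>S. dist c1 y = dist c1 z"
    "c2 \<in> affine hull S" "\<forall>y\<in>S. \<forall>z\<in>S. dist c2 y = dist c2 z"
  shows "c1 = c2"
proof (cases "S = {}")
  case True then show ?thesis using assms by simp
next
  case False
  then obtain y0 where y0: "y0 \<in> S" by auto
  have "\<forall>y\<in>S. inner (c1 - c2) y = inner (c1 - c2) y0"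
  proof
    fix y assume y: "y \<in> S"
    have "dist c1 y = dist c1 y0" "dist c2 y = dist c2 y0" using assms(2,4) y y0 by blast+
    then have "(norm (c1 - y))\<^sup>2 = (norm (c1 - y0))\<^sup>2" "(norm (c2 - y))\<^sup>2 = (norm (c2 - y0))\<^sup>2"
      by (simp_all add: dist_norm)
    then show "inner (c1 - c2) y = inner (c1 - c2) y0"
      by (simp add: power2_norm_eq_inner inner_diff_left inner_diff_right inner_commute algebra_simps)
  qed
  then have "perp (c1 - c2) S" by (rule perpI)
  then have "inner (c1 - c2) (c1 - c2) = 0" using perpD assms(1,3) by blast
  then show ?thesis by simp
qed

lemma circ_eq:
  fixes c :: "'a::euclidean_space"
  assumes "c \<in> affine hull S" "\<forall>y\<in>S. \<forall>z\<in>S. dist c y = dist c z"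
  shows "circumcenter S = c"
  unfolding circumcenter_def
proof (rule the_equality)
  show "c \<in> affine hull S \<and> (\<forall>y\<in>S. \<forall>z\<in>S. dist c y = dist c z)" using assms by blast
  fix c' assume "c' \<in> affine hull S \<and> (\<forall>y\<in>S. \<forall>z\<in>S. dist c' y = dist c' z)"
  then show "c' = c" using circ_unique[of c' S c] assms by blast
qed

lemma circ_exists:
  fixes S :: "'a::euclidean_space set"
  assumes "finite S" "\<not> affine_dependent S" "S \<noteq> {}"
  shows "\<exists>c\<in>affine hull S. \<forall>y\<in>S. \<forall>z\<in>S. dist c y = dist c z"
  using assms
proof (induction S rule: finite_induct)
  case empty then show ?case by simp
next
  case (insert x T)
  show ?case
  proof (cases "T = {}")
    case True then show ?thesis by (auto intro: hull_inc)
  next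
    case False
    have indT: "\<not> affine_dependent T"
      using insert.prems(1) affine_dependent_subset[of T "insert x T"] by blast
    obtain cT where cT: "cT \<in> affine hull T" "\<forall>y\<in>T. \<forall>z\<in>T. dist cT y = dist cT z"
      using insert.IH[OF indT False] by blast
    obtain p where p: "p \<in> affine hull T" "perp (x - p) T" using foot_exists[OF False] by blast
    obtain y0 where y0: "y0 \<in> T" using False by auto
    have xnot: "x \<notin> affine hull T"
      using insert.prems(1) insert.hyps(2) unfolding affine_dependent_def
      by (metis Diff_insert_absorb insertI1)
    define d where "d = x - p"
    have dnz: "d \<noteq> 0" using xnot p(1) by (auto simp: d_def)
    define N where "N = (norm d)\<^sup>2"
    have Npos: "N > 0" using dnz by (simp add: N_def)
    define rho where "rho = (norm (cT - y0))\<^sup>2"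
    define t where "t = ((norm (cT - p))\<^sup>2 + N - rho) / (2 * N)"
    define c where "c = cT + t *\<^sub>R d"
    define R where "R = rho + t\<^sup>2 * N"
    have sub: "affine hull T \<subseteq> affine hull (insert x T)" by (rule hull_mono) auto
    have cin: "c \<in> affine hull (insert x T)"
      unfolding c_def d_def
      by (rule mem_affine_3_minus[OF affine_affine_hull]) (use cT p sub hull_inc[of x "insert x T"] in auto)
    have dy: "inner d (cT - y) = 0" if "y \<in> T" for y
      using perpD[OF p(2) cT(1)] that hull_inc[of y T] by (simp add: d_def)
    have dp: "inner d (cT - p) = 0"
      using perpD[OF p(2) cT(1) p(1)] by (simp add: d_def)
    have nt: "(norm (s *\<^sub>R d))\<^sup>2 = s\<^sup>2 * N" for s
      unfolding norm_scaleR power_mult_distrib power2_abs N_def by (rule refl)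
    have eqT: "(norm (c - y))\<^sup>2 = R" if y: "y \<in> T" for y
    proof -
      have "dist cT y = dist cT y0" using cT(2) y y0 by blast
      then have r: "(norm (cT - y))\<^sup>2 = rho" by (simp add: rho_def dist_norm)
      have e: "c - y = (cT - y) + t *\<^sub>R d" by (simp add: c_def algebra_simps)
      have "inner (cT - y) (t *\<^sub>R d) = 0" using dy[OF y] by (simp add: inner_commute)
      then have "(norm ((cT - y) + t *\<^sub>R d))\<^sup>2 = (norm (cT - y))\<^sup>2 + (norm (t *\<^sub>R d))\<^sup>2" by (rule pyth)
      then have "(norm (c - y))\<^sup>2 = (norm (cT - y))\<^sup>2 + (norm (t *\<^sub>R d))\<^sup>2" unfolding e .
      then show ?thesis unfolding r nt R_def .
    qed
    have eqx: "(norm (c - x))\<^sup>2 = R"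
    proof -
      have e: "c - x = (cT - p) + (t - 1) *\<^sub>R d" by (simp add: c_def d_def algebra_simps)
      have "inner (cT - p) ((t - 1) *\<^sub>R d) = 0" using dp by (simp add: inner_commute)
      then have "(norm ((cT - p) + (t - 1) *\<^sub>R d))\<^sup>2 = (norm (cT - p))\<^sup>2 + (norm ((t - 1) *\<^sub>R d))\<^sup>2" by (rule pyth)
      then have "(norm (c - x))\<^sup>2 = (norm (cT - p))\<^sup>2 + (t - 1)\<^sup>2 * N" unfolding e nt .
      also have "\<dots> = R"
      proof -
        have "2 * N * t = (norm (cT - p))\<^sup>2 + N - rho" using Npos by (simp add: t_def)
        then show ?thesis unfolding R_def power2_eq_square by (simp add: algebra_simps)
      qed
      finally show ?thesis .
    qed
    have all: "\<forall>y\<in>insert x T. dist c y = sqrt R"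
    proof
      fix y assume y: "y \<in> insert x T"
      have "(norm (c - y))\<^sup>2 = R" using y eqT eqx by blast
      then have "sqrt R = norm (c - y)" by (metis abs_norm_cancel real_sqrt_abs)
      then show "dist c y = sqrt R" by (simp add: dist_norm)
    qed
    have "\<forall>y\<in>insert x T. \<forall>z\<in>insert x T. dist c y = dist c z"
      using all by (metis (no_types, lifting))
    then show ?thesis using cin by blast
  qed
qed

lemma real_key:
  fixes a b N0 Nj P :: real
  assumes a: "a > 0" and b: "b > 0" and N0: "N0 > 0" and Nj: "Nj > 0" and CS: "P\<^sup>2 < N0 * Nj"
    and h: "((a * P + b * Nj) / Nj)\<^sup>2 * Nj < ((a * N0 + b * P) / N0)\<^sup>2 * N0"
  shows "a * N0 + b * P > 0"
proof -
  define A where "A = a * N0 + b * P"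
  define B where "B = a * P + b * Nj"
  have h1: "B\<^sup>2 / Nj < A\<^sup>2 / N0" using h N0 Nj unfolding A_def[symmetric] B_def[symmetric]
    by (simp add: power_divide power2_eq_square)
  have h2: "B\<^sup>2 * N0 < A\<^sup>2 * Nj" using h1 N0 Nj by (simp add: field_simps)
  have id: "A\<^sup>2 * Nj - B\<^sup>2 * N0 = (N0 * Nj - P\<^sup>2) * (a\<^sup>2 * N0 - b\<^sup>2 * Nj)"
    unfolding A_def B_def by (simp add: power2_eq_square algebra_simps)
  have pos: "(N0 * Nj - P\<^sup>2) * (a\<^sup>2 * N0 - b\<^sup>2 * Nj) > 0" using h2 id by linarith
  have "N0 * Nj - P\<^sup>2 > 0" using CS by linarith
  then have key: "a\<^sup>2 * N0 > b\<^sup>2 * Nj" using pos zero_less_mult_pos by fastforce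
  show ?thesis
  proof (cases "P \<ge> 0")
    case True then show ?thesis using a b N0 by (simp add: add_pos_nonneg)
  next
    case False
    show ?thesis
    proof (rule ccontr)
      assume "\<not> ?thesis"
      then have "a * N0 \<le> - (b * P)" by linarith
      moreover have "0 \<le> a * N0" using a N0 by simp
      ultimately have "(a * N0)\<^sup>2 \<le> (b * P)\<^sup>2"
        by (metis power2_minus power_mono)
      then have "a\<^sup>2 * N0 * N0 \<le> b\<^sup>2 * P\<^sup>2" by (simp add: power2_eq_square algebra_simps)
      also have "\<dots> \<le> b\<^sup>2 * (N0 * Nj)" using CS b by (simp add: mult_left_mono less_imp_le)
      finally have "a\<^sup>2 * N0 * N0 \<le> b\<^sup>2 * Nj * N0" by (simp add: algebra_simps)
      then have "a\<^sup>2 * N0 \<le> b\<^sup>2 * Nj" using N0 by simp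
      then show False using key by linarith
    qed
  qed
qed

lemma sum_split2:
  fixes f :: "'b \<Rightarrow> 'c::comm_monoid_add"
  assumes "finite X" "x0 \<in> X" "j \<in> X" "j \<noteq> x0"
  shows "sum f X = sum f (X - {x0, j}) + f j + f x0"
proof -
  have "sum f X = f x0 + sum f (X - {x0})" using sum.remove[OF assms(1,2)] .
  also have "sum f (X - {x0}) = f j + sum f (X - {x0} - {j})"
    using sum.remove[of "X - {x0}" j f] assms by auto
  also have "X - {x0} - {j} = X - {x0, j}" by auto
  finally show ?thesis by (simp add: algebra_simps)
qed


lemma key:
  fixes X :: "'a::euclidean_space set" and c p0 x0 j :: 'a and lam mu :: "'a \<Rightarrow> real"
  assumes fin: "finite X" and ind: "\<not> affine_dependent X" and x0: "x0 \<in> X" and j: "j \<in> X"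
    and jx0: "j \<noteq> x0" and Gne: "X - {x0, j} \<noteq> {}"
    and mupos: "\<forall>x\<in>X. 0 < mu x" and musum: "sum mu X = 1" and muc: "(\<Sum>x\<in>X. mu x *\<^sub>R x) = c"
    and p0: "p0 \<in> affine hull (X - {x0})" "perp (c - p0) (X - {x0})"
    and lamsum: "sum lam (X - {x0}) = 1" and lamp: "(\<Sum>x\<in>X - {x0}. lam x *\<^sub>R x) = p0"
    and less: "infdist c (affine hull (X - {x0})) < infdist c (affine hull (X - {j}))"
  shows "lam j > 0"
proof -
  define G where "G = X - {x0, j}"
  define F where "F = X - {x0}"
  define Fj where "Fj = X - {j}"
  have finG: "finite G" using fin by (simp add: G_def)
  have GF: "affine hull G \<subseteq> affine hull F" by (rule hull_mono) (auto simp: G_def F_def)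
  have GFj: "affine hull G \<subseteq> affine hull Fj" by (rule hull_mono) (auto simp: G_def Fj_def)
  have jF: "j \<in> affine hull F" using j jx0 by (auto simp: F_def intro: hull_inc)
  have x0Fj: "x0 \<in> affine hull Fj" using x0 jx0 by (auto simp: Fj_def intro: hull_inc)
  have jnot: "j \<notin> affine hull Fj" using ind j unfolding affine_dependent_def Fj_def by blast
  have x0not: "x0 \<notin> affine hull F" using ind x0 unfolding affine_dependent_def F_def by blast
  have Gne': "G \<noteq> {}" using Gne by (simp add: G_def)
  obtain q where q: "q \<in> affine hull G" "perp (c - q) G" using foot_exists[OF Gne'] by blast
  obtain hj where hj: "hj \<in> affine hull G" "perp (j - hj) G" using foot_exists[OF Gne'] by blast
  obtain h0 where h0: "h0 \<in> affine hull G" "perp (x0 - h0) G" using foot_exists[OF Gne'] by blast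
  define n0 where "n0 = j - hj"
  define nj where "nj = x0 - h0"
  have pn0: "perp n0 G" using hj(2) by (simp add: n0_def)
  have pnj: "perp nj G" using h0(2) by (simp add: nj_def)
  have n0nz: "n0 \<noteq> 0" using jnot hj(1) GFj by (auto simp: n0_def)
  have njnz: "nj \<noteq> 0" using x0not h0(1) GF by (auto simp: nj_def)
  define a where "a = mu j"
  define b where "b = mu x0"
  have apos: "a > 0" using mupos j by (simp add: a_def)
  have bpos: "b > 0" using mupos x0 by (simp add: b_def)
  obtain al where al: "sum al G = 1" "(\<Sum>v\<in>G. al v *\<^sub>R v) = hj"
    using hj(1) affine_hull_finite[OF finG] by blast
  obtain be where be: "sum be G = 1" "(\<Sum>v\<in>G. be v *\<^sub>R v) = h0"
    using h0(1) affine_hull_finite[OF finG] by blast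
  define g where "g = (\<Sum>v\<in>G. (mu v + a * al v + b * be v) *\<^sub>R v)"
  have sG: "sum mu G = 1 - a - b"
    using sum_split2[OF fin x0 j jx0, of mu] musum by (simp add: G_def a_def b_def)
  have ginG: "g \<in> affine hull G"
  proof -
    have "sum (\<lambda>v. mu v + a * al v + b * be v) G = 1"
      using sG al(1) be(1) by (simp add: sum.distrib sum_distrib_left[symmetric])
    then show ?thesis unfolding affine_hull_finite[OF finG] g_def by blast
  qed
  have g_eq: "g = (\<Sum>v\<in>G. mu v *\<^sub>R v) + a *\<^sub>R hj + b *\<^sub>R h0"
    unfolding g_def al(2)[symmetric] be(2)[symmetric]
    by (simp add: scaleR_add_left sum.distrib scaleR_sum_right)
  have c_eq: "c = (\<Sum>v\<in>G. mu v *\<^sub>R v) + a *\<^sub>R j + b *\<^sub>R x0"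
    using sum_split2[OF fin x0 j jx0, of "\<lambda>x. mu x *\<^sub>R x"] muc by (simp add: G_def a_def b_def)
  have cg: "c = g + a *\<^sub>R n0 + b *\<^sub>R nj"
    unfolding c_eq g_eq n0_def nj_def by (simp add: algebra_simps)
  have gq: "g = q"
  proof -
    have e1: "inner (c - q) (g - q) = 0" using perpD[OF q(2) ginG q(1)] .
    have e2: "inner n0 (g - q) = 0" using perpD[OF pn0 ginG q(1)] .
    have e3: "inner nj (g - q) = 0" using perpD[OF pnj ginG q(1)] .
    have eq: "g - q = (c - q) - a *\<^sub>R n0 - b *\<^sub>R nj" using cg by (simp add: algebra_simps)
    have w: "inner ((c - q) - a *\<^sub>R n0 - b *\<^sub>R nj) (g - q) = 0"
      using e1 e2 e3 by (simp add: inner_diff_left)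
    have "inner (g - q) (g - q) = 0" using w[folded eq] .
    then show ?thesis by simp
  qed
  have cq: "c - q = a *\<^sub>R n0 + b *\<^sub>R nj" using cg gq by (simp add: algebra_simps)
  define N0 where "N0 = inner n0 n0"
  define Nj where "Nj = inner nj nj"
  define P where "P = inner n0 nj"
  have N0pos: "N0 > 0" using n0nz by (simp add: N0_def)
  have Njpos: "Nj > 0" using njnz by (simp add: Nj_def)
  have A: "inner (c - q) n0 = a * N0 + b * P"
    unfolding cq by (simp add: inner_add_left N0_def P_def inner_commute[of nj n0])
  have B: "inner (c - q) nj = a * P + b * Nj"
    unfolding cq by (simp add: inner_add_left inner_add_right Nj_def P_def inner_commute)
  define t where "t = (a * N0 + b * P) / N0"
  define s where "s = (a * P + b * Nj) / Nj"
  define p0' where "p0' = q + t *\<^sub>R n0"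
  define pj' where "pj' = q + s *\<^sub>R nj"
  have qF: "q \<in> affine hull F" using q(1) GF by blast
  have qFj: "q \<in> affine hull Fj" using q(1) GFj by blast
  have p0'F: "p0' \<in> affine hull F" unfolding p0'_def n0_def
    by (rule mem_affine_3_minus[OF affine_affine_hull qF jF]) (use hj(1) GF in blast)
  have pj'Fj: "pj' \<in> affine hull Fj" unfolding pj'_def nj_def
    by (rule mem_affine_3_minus[OF affine_affine_hull qFj x0Fj]) (use h0(1) GFj in blast)
  have o0G: "inner (c - p0') (w - q) = 0" if "w \<in> affine hull G" for w
  proof -
    have "inner (c - q) (w - q) = 0" "inner n0 (w - q) = 0"
      using perpD[OF q(2) that q(1)] perpD[OF pn0 that q(1)] by auto
    then show ?thesis unfolding p0'_def by (simp add: inner_diff_left algebra_simps)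
  qed
  have ojG: "inner (c - pj') (w - q) = 0" if "w \<in> affine hull G" for w
  proof -
    have "inner (c - q) (w - q) = 0" "inner nj (w - q) = 0"
      using perpD[OF q(2) that q(1)] perpD[OF pnj that q(1)] by auto
    then show ?thesis unfolding pj'_def by (simp add: inner_diff_left algebra_simps)
  qed
  have o0n: "inner (c - p0') n0 = 0"
  proof -
    have "inner (c - p0') n0 = inner (c - q) n0 - t * N0"
      unfolding p0'_def by (simp add: inner_diff_left N0_def algebra_simps)
    then show ?thesis using A N0pos by (simp add: t_def)
  qed
  have ojn: "inner (c - pj') nj = 0"
  proof -
    have "inner (c - pj') nj = inner (c - q) nj - s * Nj"
      unfolding pj'_def by (simp add: inner_diff_left Nj_def algebra_simps)
    then show ?thesis using B Njpos by (simp add: s_def)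
  qed
  have perp0: "perp (c - p0') F"
  proof (rule perpI[where b = "inner (c - p0') q"], rule ballI)
    fix y assume y: "y \<in> F"
    show "inner (c - p0') y = inner (c - p0') q"
    proof (cases "y = j")
      case True
      have "inner (c - p0') (j - q) = inner (c - p0') n0 + inner (c - p0') (hj - q)"
        by (simp add: n0_def inner_diff_right)
      also have "\<dots> = 0" using o0n o0G[OF hj(1)] by simp
      finally show ?thesis using True by (simp add: inner_diff_right)
    next
      case False
      then have "y \<in> G" using y by (auto simp: F_def G_def)
      then have "inner (c - p0') (y - q) = 0" by (rule o0G[OF hull_inc])
      then show ?thesis by (simp add: inner_diff_right)
    qed
  qed
  have perpj: "perp (c - pj') Fj"
  proof (rule perpI[where b = "inner (c - pj') q"], rule ballI)
    fix y assume y: "y \<in> Fj"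
    show "inner (c - pj') y = inner (c - pj') q"
    proof (cases "y = x0")
      case True
      have "inner (c - pj') (x0 - q) = inner (c - pj') nj + inner (c - pj') (h0 - q)"
        by (simp add: nj_def inner_diff_right)
      also have "\<dots> = 0" using ojn ojG[OF h0(1)] by simp
      finally show ?thesis using True by (simp add: inner_diff_right)
    next
      case False
      then have "y \<in> G" using y by (auto simp: Fj_def G_def)
      then have "inner (c - pj') (y - q) = 0" by (rule ojG[OF hull_inc])
      then show ?thesis by (simp add: inner_diff_right)
    qed
  qed
  have d0: "infdist c (affine hull F) = dist c p0'" by (rule infdist_foot[OF p0'F perp0])
  have dj: "infdist c (affine hull Fj) = dist c pj'" by (rule infdist_foot[OF pj'Fj perpj])
  have nq0: "(norm (c - q))\<^sup>2 = (norm (c - p0'))\<^sup>2 + t\<^sup>2 * N0"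
  proof -
    have "inner (c - p0') (t *\<^sub>R n0) = 0" using o0n by simp
    then have "(norm ((c - p0') + t *\<^sub>R n0))\<^sup>2 = (norm (c - p0'))\<^sup>2 + (norm (t *\<^sub>R n0))\<^sup>2" by (rule pyth)
    moreover have "(c - p0') + t *\<^sub>R n0 = c - q" by (simp add: p0'_def)
    moreover have "(norm (t *\<^sub>R n0))\<^sup>2 = t\<^sup>2 * N0"
      unfolding norm_scaleR power_mult_distrib power2_abs N0_def power2_norm_eq_inner ..
    ultimately show ?thesis by simp
  qed
  have nqj: "(norm (c - q))\<^sup>2 = (norm (c - pj'))\<^sup>2 + s\<^sup>2 * Nj"
  proof -
    have "inner (c - pj') (s *\<^sub>R nj) = 0" using ojn by simp
    then have "(norm ((c - pj') + s *\<^sub>R nj))\<^sup>2 = (norm (c - pj'))\<^sup>2 + (norm (s *\<^sub>R nj))\<^sup>2" by (rule pyth)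
    moreover have "(c - pj') + s *\<^sub>R nj = c - q" by (simp add: pj'_def)
    moreover have "(norm (s *\<^sub>R nj))\<^sup>2 = s\<^sup>2 * Nj"
      unfolding norm_scaleR power_mult_distrib power2_abs Nj_def power2_norm_eq_inner ..
    ultimately show ?thesis by simp
  qed
  have "dist c p0' < dist c pj'" using less d0 dj by (simp add: F_def Fj_def)
  then have "(norm (c - p0'))\<^sup>2 < (norm (c - pj'))\<^sup>2"
    by (simp add: dist_norm power_strict_mono)
  then have st: "s\<^sup>2 * Nj < t\<^sup>2 * N0" using nq0 nqj by linarith
  have CS: "P\<^sup>2 < N0 * Nj"
  proof -
    define r where "r = P / Nj"
    have wnz: "n0 - r *\<^sub>R nj \<noteq> 0"
    proof
      assume "n0 - r *\<^sub>R nj = 0"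
      then have "j = hj + r *\<^sub>R (x0 - h0)" by (simp add: n0_def nj_def algebra_simps)
      moreover have "hj + r *\<^sub>R (x0 - h0) \<in> affine hull Fj"
        by (rule mem_affine_3_minus[OF affine_affine_hull _ x0Fj]) (use hj(1) h0(1) GFj in blast)+
      ultimately show False using jnot by simp
    qed
    then have "inner (n0 - r *\<^sub>R nj) (n0 - r *\<^sub>R nj) > 0" by simp
    also have "inner (n0 - r *\<^sub>R nj) (n0 - r *\<^sub>R nj) = N0 - 2 * r * P + r\<^sup>2 * Nj"
      by (simp add: inner_diff_left inner_diff_right N0_def Nj_def P_def inner_commute power2_eq_square algebra_simps)
    also have "\<dots> = N0 - P\<^sup>2 / Nj" using Njpos by (simp add: r_def power2_eq_square field_simps)
    finally have "P\<^sup>2 / Nj < N0" by simp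
    then show ?thesis using Njpos by (simp add: field_simps)
  qed
  have Apos: "a * N0 + b * P > 0"
    by (rule real_key[OF apos bpos N0pos Njpos CS]) (use st in \<open>simp add: s_def t_def\<close>)
  have tpos: "t > 0" using Apos N0pos by (simp add: t_def)
  have pp: "p0 = p0'" using foot_unique[of p0 F c p0'] p0 p0'F perp0 by (simp add: F_def)
  have jFs: "j \<in> X - {x0}" using j jx0 by simp
  have lsplit: "sum f (X - {x0}) = sum f G + f j" for f :: "'a \<Rightarrow> 'c::comm_monoid_add"
  proof -
    have "sum f (X - {x0}) = f j + sum f (X - {x0} - {j})" using sum.remove[of "X - {x0}" j f] fin jFs by auto
    also have "X - {x0} - {j} = G" by (auto simp: G_def)
    finally show ?thesis by (simp add: add.commute)
  qed
  define g' where "g' = (\<Sum>v\<in>G. (lam v + lam j * al v) *\<^sub>R v)"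
  have g'G: "g' \<in> affine hull G"
  proof -
    have "sum lam G = 1 - lam j" using lamsum lsplit[of lam] by simp
    then have "sum (\<lambda>v. lam v + lam j * al v) G = 1"
      using al(1) by (simp add: sum.distrib sum_distrib_left[symmetric])
    then show ?thesis unfolding affine_hull_finite[OF finG] g'_def by blast
  qed
  have g'eq: "g' = (\<Sum>v\<in>G. lam v *\<^sub>R v) + lam j *\<^sub>R hj"
    unfolding g'_def al(2)[symmetric]
    by (simp add: scaleR_add_left sum.distrib scaleR_sum_right)
  have p0eq: "p0 = g' + lam j *\<^sub>R n0"
    using lamp lsplit[of "\<lambda>x. lam x *\<^sub>R x"] unfolding g'eq n0_def by (simp add: algebra_simps)
  have "g' - q = (t - lam j) *\<^sub>R n0"
    using pp p0eq unfolding p0'_def by (simp add: algebra_simps)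
  moreover have "inner n0 (g' - q) = 0" using perpD[OF pn0 g'G q(1)] .
  ultimately have "(t - lam j) * N0 = 0" by (simp add: N0_def)
  then have "lam j = t" using N0pos by simp
  then show ?thesis using tpos by simp
qed


theorem mainTheorem17:
  fixes X :: "'a::euclidean_space set" and k :: nat and x0 :: 'a
  assumes "k \<ge> 2"
    and "finite X" and "card X = k + 1"
    and "\<not> affine_dependent X"
    and "circumcenter X \<in> open_simplex X"
    and "x0 \<in> X"
    and "\<forall>x\<in>X. x \<noteq> x0 \<longrightarrow>
           infdist (circumcenter X) (affine hull (X - {x0}))
             < infdist (circumcenter X) (affine hull (X - {x}))"
  shows "circumcenter (X - {x0}) \<in> open_simplex (X - {x0})"
proof -
  note fin = assms(2) and ind = assms(4) and x0 = assms(6)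
  have Xne: "X \<noteq> {}" using x0 by auto
  obtain c where c: "c \<in> affine hull X" "\<forall>y\<in>X. \<forall>z\<in>X. dist c y = dist c z"
    using circ_exists[OF fin ind Xne] by blast
  have cc: "circumcenter X = c" by (rule circ_eq[OF c])
  obtain mu where mu: "\<forall>x\<in>X. 0 < mu x" "sum mu X = 1" "(\<Sum>x\<in>X. mu x *\<^sub>R x) = c"
    using assms(5) unfolding cc open_simplex_def rel_interior_convex_hull_explicit[OF ind] by blast
  define F where "F = X - {x0}"
  have finF: "finite F" using fin by (simp add: F_def)
  have indF: "\<not> affine_dependent F"
    using ind affine_dependent_subset[of F X] by (auto simp: F_def)
  have cardF: "card F = k" using assms(3) x0 fin by (simp add: F_def)
  have Fne: "F \<noteq> {}" using cardF assms(1) by auto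
  obtain p0 where p0: "p0 \<in> affine hull F" "perp (c - p0) F" using foot_exists[OF Fne] by blast
  have pyF: "(norm (c - y))\<^sup>2 = (norm (c - p0))\<^sup>2 + (norm (p0 - y))\<^sup>2" if y: "y \<in> F" for y
  proof -
    have "inner (c - p0) (p0 - y) = 0" using perpD[OF p0(2) p0(1) hull_inc[OF y]] .
    then have "(norm ((c - p0) + (p0 - y)))\<^sup>2 = (norm (c - p0))\<^sup>2 + (norm (p0 - y))\<^sup>2" by (rule pyth)
    then show ?thesis by simp
  qed
  have eqd: "\<forall>y\<in>F. \<forall>z\<in>F. dist p0 y = dist p0 z"
  proof (intro ballI)
    fix y z assume y: "y \<in> F" and z: "z \<in> F"
    have "dist c y = dist c z" using c(2) y z by (auto simp: F_def)
    then have "(norm (c - y))\<^sup>2 = (norm (c - z))\<^sup>2" by (simp add: dist_norm)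
    then have "(norm (p0 - y))\<^sup>2 = (norm (p0 - z))\<^sup>2" using pyF[OF y] pyF[OF z] by linarith
    then have "norm (p0 - y) = norm (p0 - z)" by (metis abs_norm_cancel real_sqrt_abs)
    then show "dist p0 y = dist p0 z" by (simp add: dist_norm)
  qed
  have cF: "circumcenter F = p0" by (rule circ_eq[OF p0(1) eqd])
  obtain lam where lam: "sum lam F = 1" "(\<Sum>x\<in>F. lam x *\<^sub>R x) = p0"
    using p0(1) affine_hull_finite[OF finF] by blast
  have lpos: "\<forall>j\<in>F. 0 < lam j"
  proof
    fix j assume jF: "j \<in> F"
    have j: "j \<in> X" and jx0: "j \<noteq> x0" using jF by (auto simp: F_def)
    have "card (F - {j}) = k - 1" using cardF jF finF by simp
    then have "F - {j} \<noteq> {}" using assms(1) by (metis card.empty diff_is_0_eq not_numeral_le_zero le_trans one_le_numeral Suc_1 Suc_le_eq diff_less_mono not_less)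
    then have Gne: "X - {x0, j} \<noteq> {}" by (auto simp: F_def)
    have less: "infdist c (affine hull (X - {x0})) < infdist c (affine hull (X - {j}))"
      using assms(7) j jx0 unfolding cc by blast
    show "0 < lam j"
      by (rule key[OF fin ind x0 j jx0 Gne mu(1) mu(2) mu(3) p0[unfolded F_def] lam[unfolded F_def] less])
  qed
  have "p0 \<in> rel_interior (convex hull F)"
    unfolding rel_interior_convex_hull_explicit[OF indF] using lpos lam by blast
  then have "circumcenter F \<in> open_simplex F" using cF by (simp add: open_simplex_def)
  then show ?thesis unfolding F_def .
qed

end
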